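(* Let $\lambda>0$, $f:\mathbb{R}^n\to\mathbb{R}$ twice continuously differentiable, $\varphi=f+\lambda\|\cdot\|_1$, and $x^0$ with $\mathcal{L}_\varphi(x^0)$ bounded and $f$ twice uniformly Lipschitz continuously differentiable on an open neighborhood of it. Suppose that at iteration $k$ of PGN2CM (described in the context) a Newton-CG step is invoked and the Capped CG method returns $d_{\rm type}=\mathrm{NC}$. Then $j_k<+\infty$ and $$\varphi(x^k)-\varphi(x^{k+1})\ge c_{nc}\min\{\varepsilon_g\varepsilon_h,\varepsilon_h^3\},\qquad c_{nc}=\eta\theta^2\min\Big\{1,\frac{9(1-2\eta)^2}{L_H^2}\Big\}.$$
   Context: Constants: $L_g,L_H>0$ with, for $x,y\in\mathcal{L}_\varphi(x^0)=\{x:\varphi(x)\le\varphi(x^0)\}$, $\|\nabla^2f(x)\|\le L_g$ and $f(y)\le f(x)+\nabla f(x)^\top(y-x)+\frac12(y-x)^\top\nabla^2f(x)(y-x)+\frac{L_H}6\|y-x\|^3$. $\mathrm{sgn}(0)=1$. For $x$: $I^\varepsilon_0=\{i:|x_i|\le\varepsilon_g^{1/2}\}$, $I^\varepsilon_{\neq0}=\{i:|x_i|>\varepsilon_g^{1/2}\}$; $g^\varepsilon(x)_i=(\nabla f(x))_i+\lambda$ if $x_i>\varepsilon_g^{1/2}$, $(\nabla f(x))_i-\lambda$ if $x_i<-\varepsilon_g^{1/2}$, $(\nabla f(x))_i-\min\{\max\{-\lambda-\varepsilon_g^{3/4},(\nabla f(x))_i\},\lambda+\varepsilon_g^{3/4}\}$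 otherwise. Capped CG (inputs symmetric $H$, $g$, $\epsilon$, $\zeta\in(0,1)$, $\delta$, $\bar\tau$, $M\ge0$): $\bar H=H+\bar\tau\|g\|^\delta I$, $\kappa=\frac{M+\bar\tau\|g\|^\delta}\epsilon$, $\hat\zeta=\frac\zeta{3\kappa}$, $\tau=\frac{\sqrt\kappa}{\sqrt\kappa+1}$, $T=\frac{4\kappa^4}{(1-\sqrt\tau)^2}$, $y_0=0,r_0=g,p_0=-g$; if $p_0^\top\bar Hp_0<\epsilon\|p_0\|^2$ return $(p_0,\mathrm{NC})$; if $\|Hp_0\|>M\|p_0\|$ update $M=\|Hp_0\|/\|p_0\|$ and $\kappa,\hat\zeta,\tau,T$. Loop: $\alpha_j=\|r_j\|^2/p_j^\top\bar Hp_j$, $y_{j+1}=y_j+\alpha_jp_j$, $r_{j+1}=r_j+\alpha_j\bar Hp_j$, $\beta_{j+1}=\|r_{j+1}\|^2/\|r_j\|^2$, $p_{j+1}=-r_{j+1}+\beta_{j+1}p_j$, $j\leftarrow j+1$; update $M$ (and dependent quantities) whenever $\|Hv\|>M\|v\|$ for $v\in\{p_j,y_j,r_j\}$; then if $y_j^\top\bar Hy_j<\epsilon\|y_j\|^2$ return $(y_j,\mathrm{NC})$; elif $\|r_j\|\le\hat\zeta\|r_0\|$ return $(y_j,\mathrm{SOL})$; elif $p_j^\top\bar Hp_j<\epsilon\|p_j\|^2$ return $(p_j,\mathrm{NC})$; elif $\|r_j\|>\sqrt T\tau^{j/2}\|r_0\|$, compute $y_{j+1}$, find $i<j$ with $(y_{j+1}-y_i)^\top\bar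 H(y_{j+1}-y_i)<\epsilon\|y_{j+1}-y_i\|^2$ and return $(y_{j+1}-y_i,\mathrm{NC})$. Newton-CG step of PGN2CM (parameters $0<\varepsilon_g,\varepsilon_h<1$, $\delta\in[0,1]$, $\hat\tau\ge1$, $\zeta\in(0,1)$, $\eta\in(0,\frac{1-\zeta}2)$, $\theta\in(0,1)$), invoked at $x^k$ when [$I^\varepsilon_0(x^k)=\emptyset$ or $g^\varepsilon(x^k)$ vanishes on $I^\varepsilon_0(x^k)$], $I^\varepsilon_{\neq0}(x^k)\neq\emptyset$ and $\|g^\varepsilon(x^k)_{I^\varepsilon_{\neq0}(x^k)}\|>\varepsilon_g$: with $H^k_{\neq0\varepsilon}=(\nabla^2f(x^k))_{I^\varepsilon_{\neq0}(x^k)}$, $g^k_{\neq0\varepsilon}=g^\varepsilon(x^k)_{I^\varepsilon_{\neq0}(x^k)}$, $\tau_k\in[\frac{2\varepsilon_h}{\|g^k_{\neq0\varepsilon}\|^\delta},\frac{2\hat\tau\varepsilon_h}{\|g^k_{\neq0\varepsilon}\|^\delta}]$, call Capped CG$(H^k_{\neq0\varepsilon},g^k_{\neq0\varepsilon},\varepsilon_h,\zeta,\delta,\tau_k,M)$ to get $(d,d_{\rm type})$; set $d^k=0$ on $I^\varepsilon_0(x^k)$ and $d^k_{I^\varepsilon_{\neq0}(x^k)}=-\mathrm{sgn}(d^\top g^k_{\neq0\varepsilon})\frac{|d^\top H^k_{\neq0\varepsilon}d|}{\|d\|^2}\frac d{\|d\|}$ if $d_{\rm type}=\mathrm{NC}$,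 $=d$ if SOL; $x^{k+1}=x^k+\theta^{j_k}d^k$ with $j_k$ the smallest nonnegative integer $j$ such that $\varphi(x^k+\theta^jd^k)<\varphi(x^k)-\eta\theta^{2j}\varepsilon_h\|d^k\|^2$. The iterates lie in $\mathcal{L}_\varphi(x^0)$. *)

theory Defs
  imports "HOL-Analysis.Analysis"
begin

text \<open>A sub-vector indexed by a set I of coordinates
  (an element of R^|I|) is modelled by the vector of R^n that vanishes outside I; the
  principal submatrix H_I acts on such vectors through sub_op.\<close>

datatype cg_type = NC | SOL

definition sgn1 :: "real \<Rightarrow> real" where
  "sgn1 t = (if t \<ge> 0 then 1 else -1)"

definition l1norm :: "real^'n \<Rightarrow> real" where
  "l1norm x = (\<Sum>i\<in>UNIV. \<bar>x$i\<bar>)"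

definition level_set :: "(real^'n \<Rightarrow> real) \<Rightarrow> real^'n \<Rightarrow> (real^'n) set" where
  "level_set phi x0 = {x. phi x \<le> phi x0}"

definition I0eps :: "real \<Rightarrow> real^'n \<Rightarrow> 'n set" where
  "I0eps eg x = {i. \<bar>x$i\<bar> \<le> sqrt eg}"

definition Inzeps :: "real \<Rightarrow> real^'n \<Rightarrow> 'n set" where
  "Inzeps eg x = {i. \<bar>x$i\<bar> > sqrt eg}"

definition geps :: "(real^'n \<Rightarrow> real^'n) \<Rightarrow> real \<Rightarrow> real \<Rightarrow> real^'n \<Rightarrow> real^'n" where
  "geps gf lam eg x = (\<chi> i. if x$i > sqrt eg then gf x $ i + lam
      else if x$i < - sqrt eg then gf x $ i - lam
      else gf x $ i - min (max (- lam - eg powr (3/4)) (gf x $ i)) (lam + eg powr (3/4)))"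

definition restrict_vec :: "'n set \<Rightarrow> real^'n \<Rightarrow> real^'n" where
  "restrict_vec I v = (\<chi> i. if i \<in> I then v$i else 0)"

definition sub_op :: "real^'n^'n \<Rightarrow> 'n set \<Rightarrow> real^'n \<Rightarrow> real^'n" where
  "sub_op H I v = restrict_vec I (H *v restrict_vec I v)"

text \<open>CG iterates (y_j, r_j, p_j) for the shifted operator Hb (they do not depend on M).\<close>
fun ccg_iter :: "(real^'n \<Rightarrow> real^'n) \<Rightarrow> real^'n \<Rightarrow> nat \<Rightarrow> (real^'n) \<times> (real^'n) \<times> (real^'n)" where
  "ccg_iter Hb g 0 = (0, g, - g)"
| "ccg_iter Hb g (Suc j) = (case ccg_iter Hb g j of (y, r, p) \<Rightarrow>
     let a = (norm r)^2 / (p \<bullet> Hb p); y' = y + a *\<^sub>R p; r' = r + a *\<^sub>R Hb p;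
         b = (norm r')^2 / (norm r)^2 in (y', r', - r' + b *\<^sub>R p))"

definition M_upd :: "(real^'n \<Rightarrow> real^'n) \<Rightarrow> real \<Rightarrow> real^'n \<Rightarrow> real" where
  "M_upd H M v = (if norm (H v) > M * norm v then norm (H v) / norm v else M)"

text \<open>Value of M after iteration j (after the updates with p_j, y_j, r_j).\<close>
fun ccg_M :: "(real^'n \<Rightarrow> real^'n) \<Rightarrow> (real^'n \<Rightarrow> real^'n) \<Rightarrow> real^'n \<Rightarrow> real \<Rightarrow> nat \<Rightarrow> real" where
  "ccg_M H Hb g M0 0 = M_upd H M0 (- g)"
| "ccg_M H Hb g M0 (Suc j) = (case ccg_iter Hb g (Suc j) of (y, r, p) \<Rightarrow>
     M_upd H (M_upd H (M_upd H (ccg_M H Hb g M0 j) p) y) r)"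

text \<open>capped_cg H g eps zeta delta taubar M d dt: Capped CG on input (H,g,eps,zeta,delta,taubar,M)
  returns (d, dt). The choice of i in the last branch is nondeterministic (any valid i).\<close>
definition capped_cg :: "(real^'n \<Rightarrow> real^'n) \<Rightarrow> real^'n \<Rightarrow> real \<Rightarrow> real \<Rightarrow> real \<Rightarrow> real \<Rightarrow> real
    \<Rightarrow> real^'n \<Rightarrow> cg_type \<Rightarrow> bool" where
  "capped_cg H g eps zeta delta taubar M d dt \<longleftrightarrow>
   (let Hb = (\<lambda>v. H v + (taubar * norm g powr delta) *\<^sub>R v);
        Y = (\<lambda>j. fst (ccg_iter Hb g j));
        R = (\<lambda>j. fst (snd (ccg_iter Hb g j)));
        P = (\<lambda>j. snd (snd (ccg_iter Hb g j)));
        kap = (\<lambda>j. (ccg_M H Hb g M j + taubar * norm g powr delta) / eps);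
        zh = (\<lambda>j. zeta / (3 * kap j));
        tau = (\<lambda>j. sqrt (kap j) / (sqrt (kap j) + 1));
        T = (\<lambda>j. 4 * (kap j)^4 / (1 - sqrt (tau j))^2);
        curv = (\<lambda>v. v \<bullet> Hb v < eps * (norm v)^2);
        t1 = (\<lambda>j. curv (Y j));
        t2 = (\<lambda>j. norm (R j) \<le> zh j * norm (R 0));
        t3 = (\<lambda>j. curv (P j));
        t4 = (\<lambda>j. norm (R j) > sqrt (T j) * tau j powr (real j / 2) * norm (R 0))
    in if curv (P 0) then (d = P 0 \<and> dt = NC)
       else (\<exists>j\<ge>1. (\<forall>i. 1 \<le> i \<and> i < j \<longrightarrow> \<not> (t1 i \<or> t2 i \<or> t3 i \<or> t4 i)) \<and>
          (if t1 j then d = Y j \<and> dt = NC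
           else if t2 j then d = Y j \<and> dt = SOL
           else if t3 j then d = P j \<and> dt = NC
           else t4 j \<and> dt = NC \<and> (\<exists>i<j. curv (Y (Suc j) - Y i) \<and> d = Y (Suc j) - Y i))))"

end

theory Submission
  imports Defs
begin

lemma line_decrease:
  fixes h h' :: "real \<Rightarrow> real" and h2 t :: real
  assumes deriv: "\<And>s. (h has_real_derivative h' s) (at s)"
    and d2: "(h' has_real_derivative h2) (at 0)" and h2: "h2 < 0" and h10: "h' 0 \<le> 0"
    and Q: "\<And>s. 0 < s \<Longrightarrow> s \<le> t \<Longrightarrow> h s \<le> h 0 \<Longrightarrow> h s < h 0"
    and s: "0 < s" "s \<le> t"
  shows "h s < h 0"
proof -
  obtain \<delta> where dp: "\<delta> > 0" and dec: "\<forall>u>0. u < \<delta> \<longrightarrow> h' 0 > h' (0 + u)"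
    using DERIV_neg_dec_right[OF d2 h2] by blast
  have loc: "h u < h 0" if "0 < u" "u < \<delta>" for u
  proof -
    have "\<exists>z. 0 < z \<and> z < u \<and> h u - h 0 = (u - 0) * h' z"
      by (rule MVT2) (use that deriv in auto)
    then obtain z where z: "0 < z" "z < u" "h u - h 0 = (u - 0) * h' z" by blast
    have "h' z < 0" using dec z that h10 by force
    then have "(u - 0) * h' z < 0" using that by (simp add: mult_pos_neg)
    then show ?thesis using z by linarith
  qed
  show ?thesis
  proof (rule ccontr)
    assume "\<not> h s < h 0"
    define s' where "s' = min (\<delta>/2) (s/2)"
    have s'p: "0 < s'" "s' < \<delta>" "s' \<le> s" using dp s by (auto simp: s'_def)
    have "h s' < h 0" using loc s'p by auto
    moreover have "continuous_on {s'..s} h"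
      using deriv by (meson DERIV_isCont continuous_at_imp_continuous_on)
    ultimately obtain z where z: "s' \<le> z" "z \<le> s" "h z = h 0"
      using IVT'[of h s' "h 0" s] \<open>\<not> h s < h 0\<close> s'p by force
    then show False using Q[of z] s'p s by auto
  qed
qed

definition suppd :: "'n set \<Rightarrow> real^'n \<Rightarrow> bool" where
  "suppd I v \<longleftrightarrow> (\<forall>i. i \<notin> I \<longrightarrow> v$i = 0)"

lemma suppd_add: "suppd I u \<Longrightarrow> suppd I v \<Longrightarrow> suppd I (u + v)"
  and suppd_diff: "suppd I u \<Longrightarrow> suppd I v \<Longrightarrow> suppd I (u - v)"
  and suppd_scale: "suppd I u \<Longrightarrow> suppd I (c *\<^sub>R u)"
  and suppd_neg: "suppd I u \<Longrightarrow> suppd I (- u)"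
  and suppd_zero: "suppd I 0"
  by (auto simp: suppd_def)

lemma ccg_supp:
  assumes g: "suppd I g" and Hb: "\<And>v. suppd I v \<Longrightarrow> suppd I (Hb v)"
  shows "suppd I (fst (ccg_iter Hb g j)) \<and> suppd I (fst (snd (ccg_iter Hb g j)))
         \<and> suppd I (snd (snd (ccg_iter Hb g j)))"
proof (induction j)
  case 0
  then show ?case using g by (simp add: suppd_zero suppd_neg)
next
  case (Suc j)
  obtain y r p where e: "ccg_iter Hb g j = (y, r, p)" by (cases "ccg_iter Hb g j") auto
  then have "suppd I y" "suppd I r" "suppd I p" using Suc by auto
  moreover have "suppd I (Hb p)" using Hb \<open>suppd I p\<close> by blast
  ultimately show ?case using e by (simp add: Let_def suppd_add suppd_diff suppd_scale suppd_neg)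
qed

lemma cg_nc:
  assumes cg: "capped_cg H g eps zeta delta taubar M d NC"
    and g: "suppd I g" and H: "\<And>v. suppd I v \<Longrightarrow> suppd I (H v)"
  shows "d \<bullet> (H d + (taubar * norm g powr delta) *\<^sub>R d) < eps * (norm d)^2 \<and> suppd I d"
proof -
  define Hb where "Hb = (\<lambda>v. H v + (taubar * norm g powr delta) *\<^sub>R v)"
  have Hb: "suppd I (Hb v)" if "suppd I v" for v
    using H[OF that] that by (simp add: Hb_def suppd_add suppd_scale)
  have S: "suppd I (fst (ccg_iter Hb g j)) \<and> suppd I (fst (snd (ccg_iter Hb g j)))
         \<and> suppd I (snd (snd (ccg_iter Hb g j)))" for j
    by (rule ccg_supp[OF g Hb])
  have "d \<bullet> Hb d < eps * (norm d)^2 \<and> suppd I d"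
    using cg[unfolded capped_cg_def, folded Hb_def, unfolded Let_def] S
    by (auto split: if_splits simp del: ccg_iter.simps intro: suppd_diff suppd_neg[OF g])
  then show ?thesis by (simp add: Hb_def)
qed
lemma line_deriv:
  fixes F :: "real^'n \<Rightarrow> 'b::real_normed_vector"
  assumes "(F has_derivative F') (at (x + s *\<^sub>R v))"
  shows "((\<lambda>t. F (x + t *\<^sub>R v)) has_derivative (\<lambda>u. F' (u *\<^sub>R v))) (at s)"
proof -
  have "((\<lambda>t. x + t *\<^sub>R v) has_derivative (\<lambda>u. u *\<^sub>R v)) (at s)"
    by (auto intro!: derivative_eq_intros)
  moreover have "(F has_derivative F') (at ((\<lambda>t. x + t *\<^sub>R v) s))" using assms by simp
  ultimately show ?thesis by (rule has_derivative_compose)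
qed

lemma inner_restrict: "suppd I d \<Longrightarrow> d \<bullet> restrict_vec I v = d \<bullet> v"
  unfolding inner_vec_def restrict_vec_def suppd_def
  by (intro sum.cong) auto

lemma restrict_supp: "suppd I d \<Longrightarrow> restrict_vec I d = d"
  unfolding restrict_vec_def suppd_def by (auto simp: vec_eq_iff)

lemma suppd_restrict: "suppd I (restrict_vec I d)"
  unfolding restrict_vec_def suppd_def by auto

lemma arith_q: "q < (0::real) \<Longrightarrow> n > 0 \<Longrightarrow> (\<bar>q\<bar> / n^3)^2 * q = - ((\<bar>q\<bar> / n^2)^3)"
proof -
  assume a: "q < 0" "n > 0"
  define Q where "Q = \<bar>q\<bar>"
  have q: "q = - Q" using a unfolding Q_def by simp
  have "(Q / n^3)^2 * (-Q) = - (Q^3 / n^6)"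
    by (simp add: power_divide flip: power_mult) (simp add: power2_eq_square power3_eq_cube)
  moreover have "(Q / n^2)^3 = Q^3 / n^6"
    by (simp add: power_divide flip: power_mult)
  moreover have "Q \<ge> 0" unfolding Q_def by simp
  ultimately show ?thesis unfolding q by simp
qed

lemma final_arith:
  fixes eta theta eh eg C2 X R :: real
  assumes pos: "eta > 0" "eh > 0" "eg > 0" "C2 \<ge> 0" "X \<ge> 0"
    and R: "R \<ge> eta * theta^2 * eh * X"
    and X: "X \<ge> eg \<or> X \<ge> C2 * eh^2 \<or> X \<ge> eh^2"
  shows "R \<ge> eta * theta^2 * min 1 C2 * min (eg * eh) (eh^3)"
proof -
  have m1: "0 \<le> min 1 C2" "min 1 C2 \<le> 1" "min 1 C2 \<le> C2" using pos by auto
  have m2: "0 \<le> min (eg * eh) (eh^3)" "min (eg * eh) (eh^3) \<le> eg * eh" "min (eg * eh) (eh^3) \<le> eh^3"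
    using pos by auto
  have "min 1 C2 * min (eg * eh) (eh^3) \<le> eh * X"
  proof -
    consider "X \<ge> eg" | "X \<ge> C2 * eh^2" | "X \<ge> eh^2" using X by blast
    then show ?thesis
    proof cases
      case 1
      have "min 1 C2 * min (eg * eh) (eh^3) \<le> 1 * (eg * eh)"
        by (rule mult_mono) (use m1 m2 in auto)
      also have "\<dots> \<le> eh * X" using 1 pos by (simp add: mult.commute mult_left_mono)
      finally show ?thesis .
    next
      case 2
      have "min 1 C2 * min (eg * eh) (eh^3) \<le> C2 * eh^3"
        by (rule mult_mono) (use m1 m2 pos in auto)
      also have "\<dots> = eh * (C2 * eh^2)" by (simp add: power3_eq_cube power2_eq_square)
      also have "\<dots> \<le> eh * X" using 2 pos by (simp add: mult_left_mono)
      finally show ?thesis .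
    next
      case 3
      have "min 1 C2 * min (eg * eh) (eh^3) \<le> 1 * eh^3"
        by (rule mult_mono) (use m1 m2 pos in auto)
      also have "\<dots> = eh * eh^2" by (simp add: power3_eq_cube power2_eq_square)
      also have "\<dots> \<le> eh * X" using 3 pos by (simp add: mult_left_mono)
      finally show ?thesis .
    qed
  qed
  then have "eta * theta^2 * (min 1 C2 * min (eg * eh) (eh^3)) \<le> eta * theta^2 * (eh * X)"
    using pos by (intro mult_left_mono) auto
  then show ?thesis using R by (simp add: mult.assoc)
qed

theorem lemma9:
  fixes f :: "real^'n \<Rightarrow> real" and gf :: "real^'n \<Rightarrow> real^'n" and Hf :: "real^'n \<Rightarrow> real^'n^'n"
    and lam eg eh delta tauhat zeta eta theta Lg LH tauk M :: real
    and x0 xk d :: "real^'n"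
  defines "phi \<equiv> (\<lambda>x. f x + lam * l1norm x)"
  defines "I \<equiv> Inzeps eg xk"
  defines "gk \<equiv> restrict_vec I (geps gf lam eg xk)"
  defines "Hk \<equiv> sub_op (Hf xk) I"
  defines "dk \<equiv> restrict_vec I
             ((- sgn1 (d \<bullet> gk) * \<bar>d \<bullet> Hk d\<bar> / (norm d)^2 / norm d) *\<^sub>R d)"
  defines "jk \<equiv> (LEAST j::nat. phi (xk + theta^j *\<^sub>R dk) < phi xk - eta * theta^(2*j) * eh * (norm dk)^2)"
  assumes lam: "lam > 0"
    and f_grad: "\<forall>x. (f has_derivative (\<lambda>h. gf x \<bullet> h)) (at x)"
    and f_hess: "\<forall>x. (gf has_derivative (\<lambda>h. Hf x *v h)) (at x)"
    and hess_cont: "continuous_on UNIV Hf"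
    and lev_bdd: "bounded (level_set phi x0)"
    and lip_nbhd: "\<exists>U. open U \<and> level_set phi x0 \<subseteq> U \<and>
                     (\<exists>L. \<forall>x\<in>U. \<forall>y\<in>U. onorm (\<lambda>v. (Hf x - Hf y) *v v) \<le> L * norm (x - y))"
    and Lg_pos: "Lg > 0" and LH_pos: "LH > 0"
    and Lg_bd: "\<forall>x\<in>level_set phi x0. onorm (\<lambda>v. Hf x *v v) \<le> Lg"
    and LH_bd: "\<forall>x\<in>level_set phi x0. \<forall>y\<in>level_set phi x0.
                  f y \<le> f x + gf x \<bullet> (y - x) + 1/2 * ((y - x) \<bullet> (Hf x *v (y - x)))
                        + LH / 6 * (norm (y - x))^3"
    and eg: "0 < eg" "eg < 1" and eh: "0 < eh" "eh < 1"
    and delta: "0 \<le> delta" "delta \<le> 1" and tauhat: "tauhat \<ge> 1"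
    and zeta: "0 < zeta" "zeta < 1" and eta: "0 < eta" "eta < (1 - zeta) / 2"
    and theta: "0 < theta" "theta < 1"
    and xk_lev: "xk \<in> level_set phi x0"
    and inv1: "I0eps eg xk = {} \<or> (\<forall>i\<in>I0eps eg xk. geps gf lam eg xk $ i = 0)"
    and inv2: "I \<noteq> {}"
    and inv3: "norm gk > eg"
    and tauk: "2 * eh / norm gk powr delta \<le> tauk" "tauk \<le> 2 * tauhat * eh / norm gk powr delta"
    and M: "M \<ge> 0"
    and cg: "capped_cg Hk gk eh zeta delta tauk M d NC"
  shows "(\<exists>j::nat. phi (xk + theta^j *\<^sub>R dk) < phi xk - eta * theta^(2*j) * eh * (norm dk)^2)
     \<and> phi xk - phi (xk + theta^jk *\<^sub>R dk)
         \<ge> eta * theta^2 * min 1 (9 * (1 - 2*eta)^2 / LH^2) * min (eg * eh) (eh^3)"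
proof -
  have gk_supp: "suppd I gk" unfolding gk_def by (rule suppd_restrict)
  have Hk_supp: "suppd I (Hk v)" for v unfolding Hk_def sub_op_def by (rule suppd_restrict)
  have cgd: "d \<bullet> (Hk d + (tauk * norm gk powr delta) *\<^sub>R d) < eh * (norm d)^2" and d_supp: "suppd I d"
    using cg_nc[OF cg gk_supp Hk_supp] by auto
  have dnz: "d \<noteq> 0" using cgd by auto
  have nd: "norm d > 0" using dnz by auto
  have Pp: "norm gk powr delta > 0" using inv3 eg by auto
  have tP: "tauk * norm gk powr delta \<ge> 2 * eh"
    using tauk(1) Pp by (simp add: divide_le_eq)
  define q where "q = d \<bullet> Hk d"
  have "q + (tauk * norm gk powr delta) * (norm d)^2 < eh * (norm d)^2"
    using cgd by (simp add: q_def inner_add_right power2_norm_eq_inner)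
  moreover have "(tauk * norm gk powr delta) * (norm d)^2 \<ge> 2 * eh * (norm d)^2"
    using tP by (simp add: mult_right_mono)
  ultimately have qneg: "q < - eh * (norm d)^2" by linarith
  have "eh * (norm d)^2 > 0" using eh nd by simp
  then have qlt0: "q < 0" using qneg by linarith
  have qH: "q = d \<bullet> (Hf xk *v d)"
    unfolding q_def Hk_def sub_op_def using d_supp by (simp add: inner_restrict restrict_supp)
  define c where "c = - sgn1 (d \<bullet> gk) * \<bar>q\<bar> / (norm d)^2 / norm d"
  have dk: "dk = c *\<^sub>R d"
    unfolding dk_def c_def q_def by (rule restrict_supp) (use d_supp in \<open>simp add: suppd_scale suppd_neg\<close>)
  define a where "a = norm dk"
  have abs_c: "\<bar>c\<bar> = \<bar>q\<bar> / (norm d)^3"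
    unfolding c_def sgn1_def by (simp add: abs_mult power3_eq_cube power2_eq_square)
  have a_eq: "a = \<bar>q\<bar> / (norm d)^2"
    unfolding a_def dk using abs_c nd by (simp add: power3_eq_cube power2_eq_square)
  have a_gt: "a > eh"
  proof -
    have "\<bar>q\<bar> > eh * (norm d)^2" using qneg by linarith
    then show ?thesis unfolding a_eq using nd by (simp add: less_divide_eq)
  qed
  have apos: "a > 0" using a_gt eh by linarith
  have DHD: "dk \<bullet> (Hf xk *v dk) = - (a^3)"
  proof -
    have "dk \<bullet> (Hf xk *v dk) = c * c * q"
      unfolding dk qH by (simp add: matrix_vector_mult_scaleR)
    also have "c * c = (\<bar>q\<bar> / (norm d)^3)^2" using abs_c by (metis abs_mult_self_eq power2_eq_square)
    also have "(\<bar>q\<bar> / (norm d)^3)^2 * q = - (a^3)"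
      unfolding a_eq using qlt0 nd by (rule arith_q)
    finally show ?thesis .
  qed
  have gD: "gk \<bullet> dk \<le> 0"
  proof -
    have "gk \<bullet> dk = - (\<bar>q\<bar> / (norm d)^2 / norm d) * (sgn1 (d \<bullet> gk) * (d \<bullet> gk))"
      unfolding dk c_def by (simp add: inner_commute)
    moreover have "sgn1 (d \<bullet> gk) * (d \<bullet> gk) \<ge> 0" unfolding sgn1_def by auto
    moreover have "\<bar>q\<bar> / (norm d)^2 / norm d \<ge> 0" by simp
    ultimately show ?thesis by (simp add: mult_nonneg_nonneg)
  qed
  have dk_supp: "suppd I dk" unfolding dk using d_supp by (rule suppd_scale)
  define sv :: "real^'n" where "sv = (\<chi> i. if xk$i > 0 then 1 else -1)"
  have gdec: "gk \<bullet> dk = gf xk \<bullet> dk + lam * (sv \<bullet> dk)"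
  proof -
    have "gk$i * dk$i = gf xk $ i * dk $ i + lam * (sv$i * dk$i)" for i
    proof (cases "i \<in> I")
      case True
      then have "\<bar>xk$i\<bar> > sqrt eg" unfolding I_def Inzeps_def by auto
      have sq: "sqrt eg > 0" using eg by simp
      consider "xk$i > sqrt eg" | "xk$i < - sqrt eg" using \<open>\<bar>xk$i\<bar> > sqrt eg\<close> by linarith
      then show ?thesis
      proof cases
        case 1
        then have "xk$i > 0" using sq by linarith
        then show ?thesis using 1 True unfolding gk_def restrict_vec_def geps_def sv_def
          by (simp add: algebra_simps)
      next
        case 2
        then have "\<not> xk$i > 0" "\<not> xk$i > sqrt eg" using sq by linarith+
        then show ?thesis using 2 True unfolding gk_def restrict_vec_def geps_def sv_def
          by (simp add: algebra_simps)
      qed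
    next
      case False
      then show ?thesis using dk_supp unfolding suppd_def by auto
    qed
    then show ?thesis unfolding inner_vec_def
      by (simp add: sum.distrib sum_distrib_left)
  qed
  have L1: "l1norm (xk + s *\<^sub>R dk) = l1norm xk + s * (sv \<bullet> dk)" if s: "0 \<le> s" "s * a \<le> sqrt eg" for s
  proof -
    have "\<bar>xk$i + s * dk$i\<bar> = \<bar>xk$i\<bar> + s * (sv$i * dk$i)" for i
    proof (cases "i \<in> I")
      case True
      then have xi: "\<bar>xk$i\<bar> > sqrt eg" unfolding I_def Inzeps_def by auto
      have "\<bar>dk$i\<bar> \<le> a" unfolding a_def by (rule component_le_norm_cart)
      then have "\<bar>s * dk$i\<bar> \<le> s * a" using s by (simp add: abs_mult mult_left_mono)
      then have "\<bar>s * dk$i\<bar> < \<bar>xk$i\<bar>" using s xi by linarith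
      then show ?thesis unfolding sv_def by (auto simp: abs_if)
    next
      case False
      then show ?thesis using dk_supp unfolding suppd_def by auto
    qed
    then show ?thesis unfolding l1norm_def inner_vec_def
      by (simp add: sum.distrib sum_distrib_left)
  qed
  define h where "h s = f (xk + s *\<^sub>R dk) + lam * (l1norm xk + s * (sv \<bullet> dk))" for s
  define h' where "h' s = gf (xk + s *\<^sub>R dk) \<bullet> dk + lam * (sv \<bullet> dk)" for s
  have phih: "phi (xk + s *\<^sub>R dk) = h s" if "0 \<le> s" "s * a \<le> sqrt eg" for s
    unfolding phi_def h_def using L1[OF that] by simp
  have h0: "h 0 = phi xk" unfolding h_def phi_def by simp
  have hder: "(h has_real_derivative h' s) (at s)" for s
  proof -
    have "((\<lambda>t. f (xk + t *\<^sub>R dk)) has_derivative (\<lambda>u. gf (xk + s *\<^sub>R dk) \<bullet> (u *\<^sub>R dk))) (at s)"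
      by (rule line_deriv) (use f_grad in blast)
    then have "((\<lambda>t. f (xk + t *\<^sub>R dk)) has_real_derivative (gf (xk + s *\<^sub>R dk) \<bullet> dk)) (at s)"
      by (rule has_derivative_imp_has_field_derivative) simp
    then show ?thesis unfolding h_def h'_def
      by (auto intro!: derivative_eq_intros)
  qed
  have h'der: "(h' has_real_derivative (dk \<bullet> (Hf xk *v dk))) (at 0)"
  proof -
    have "((\<lambda>t. gf (xk + t *\<^sub>R dk)) has_derivative (\<lambda>u. Hf (xk + 0 *\<^sub>R dk) *v (u *\<^sub>R dk))) (at 0)"
      by (rule line_deriv) (use f_hess in blast)
    then have "((\<lambda>t. gf (xk + t *\<^sub>R dk) \<bullet> dk) has_derivative (\<lambda>u. (Hf xk *v (u *\<^sub>R dk)) \<bullet> dk)) (at 0)"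
      by (auto intro!: derivative_eq_intros)
    then have "((\<lambda>t. gf (xk + t *\<^sub>R dk) \<bullet> dk) has_real_derivative (dk \<bullet> (Hf xk *v dk))) (at 0)"
      by (rule has_derivative_imp_has_field_derivative) (simp add: matrix_vector_mult_scaleR inner_commute)
    then show ?thesis unfolding h'_def
      by (auto intro!: derivative_eq_intros)
  qed
  have h'0: "h' 0 \<le> 0" unfolding h'_def using gdec gD by simp
  define C where "C = 3 * (1 - 2*eta) / LH"
  have Cpos: "C > 0" unfolding C_def using eta zeta LH_pos by auto
  have LHstep: "phi (xk + s *\<^sub>R dk) < phi xk - eta * s^2 * eh * a^2"
    if s: "0 < s" "s * a \<le> sqrt eg" "s < C" and lev: "xk + s *\<^sub>R dk \<in> level_set phi x0" for s
  proof -
    have "f (xk + s *\<^sub>R dk) \<le> f xk + gf xk \<bullet> (s *\<^sub>R dk) + 1/2 * ((s *\<^sub>R dk) \<bullet> (Hf xk *v (s *\<^sub>R dk)))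
                        + LH / 6 * (norm (s *\<^sub>R dk))^3"
      using LH_bd xk_lev lev by fastforce
    also have "\<dots> = f xk + s * (gf xk \<bullet> dk) - 1/2 * s^2 * a^3 + LH / 6 * (s * a)^3"
      using DHD s unfolding a_def
      by (simp add: matrix_vector_mult_scaleR power2_eq_square)
    finally have fb: "f (xk + s *\<^sub>R dk) \<le> f xk + s * (gf xk \<bullet> dk) - 1/2 * s^2 * a^3 + LH / 6 * (s * a)^3" .
    have "phi (xk + s *\<^sub>R dk) = f (xk + s *\<^sub>R dk) + lam * l1norm xk + s * lam * (sv \<bullet> dk)"
      using phih[of s] s unfolding h_def by (simp add: algebra_simps)
    also have "\<dots> \<le> phi xk + s * (gk \<bullet> dk) - 1/2 * s^2 * a^3 + LH / 6 * (s * a)^3"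
      using fb gdec unfolding phi_def by (simp add: algebra_simps)
    also have "\<dots> \<le> phi xk - s^2 * a^3 * (1/2 - LH * s / 6)"
      using gD s by (simp add: algebra_simps mult_nonneg_nonpos power3_eq_cube power2_eq_square)
    also have "\<dots> < phi xk - s^2 * a^3 * eta"
    proof -
      have "LH * s < LH * C" using s LH_pos by simp
      then have "LH * s < 3 * (1 - 2 * eta)" unfolding C_def using LH_pos by simp
      then have "1/2 - LH * s / 6 > eta" by (simp add: field_simps)
      moreover have "s^2 * a^3 > 0" using s apos by simp
      ultimately have "s^2 * a^3 * eta < s^2 * a^3 * (1/2 - LH * s / 6)" by (metis mult_strict_left_mono)
      then show ?thesis by linarith
    qed
    also have "\<dots> \<le> phi xk - eta * s^2 * eh * a^2"
    proof -
      have "s^2 * a^2 * eta * eh \<le> s^2 * a^2 * eta * a"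
        using a_gt eta by (intro mult_left_mono) auto
      then show ?thesis by (simp add: power3_eq_cube power2_eq_square algebra_simps)
    qed
    finally show ?thesis .
  qed
  have K: "phi (xk + t *\<^sub>R dk) < phi xk - eta * t^2 * eh * a^2"
    if t: "0 < t" "t * a \<le> sqrt eg" "t < C" for t
  proof -
    have ht: "h t < h 0"
    proof (rule line_decrease[OF hder h'der _ h'0, of t])
      show "dk \<bullet> (Hf xk *v dk) < 0" using DHD apos by simp
      fix s assume s: "0 < s" "s \<le> t" "h s \<le> h 0"
      have sa: "s * a \<le> t * a" using s apos by (simp add: mult_right_mono)
      have "phi (xk + s *\<^sub>R dk) \<le> phi xk" using phih[of s] s sa t h0 by simp
      then have lev: "xk + s *\<^sub>R dk \<in> level_set phi x0"
        using xk_lev unfolding level_set_def by auto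
      have "phi (xk + s *\<^sub>R dk) < phi xk - eta * s^2 * eh * a^2"
        using LHstep[OF _ _ _ lev] s sa t by linarith
      moreover have "eta * s^2 * eh * a^2 > 0" using eta s eh apos by simp
      ultimately show "h s < h 0" using phih[of s] s sa t h0 by simp
    qed (use t in auto)
    then have lev: "xk + t *\<^sub>R dk \<in> level_set phi x0"
      using phih[of t] t h0 xk_lev unfolding level_set_def by auto
    show ?thesis using LHstep[OF t lev] .
  qed
  define P where "P j \<longleftrightarrow> phi (xk + theta^j *\<^sub>R dk) < phi xk - eta * theta^(2*j) * eh * (norm dk)^2" for j :: nat
  have sq: "sqrt eg > 0" using eg by simp
  define e where "e = min (sqrt eg / a) C"
  have epos: "e > 0" unfolding e_def using sq apos Cpos by simp
  obtain j0 where j0: "theta^j0 < e" using real_arch_pow_inv[OF epos theta(2)] by blast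
  have tj0: "theta^j0 > 0" using theta by simp
  have "theta^j0 < sqrt eg / a" using j0 unfolding e_def by simp
  then have tj0a: "theta^j0 * a < sqrt eg" using apos by (simp add: pos_less_divide_eq)
  have tj0C: "theta^j0 < C" using j0 unfolding e_def by simp
  have pow2: "theta^(2*j) = (theta^j)^2" for j by (simp add: power_mult mult.commute)
  have "P j0" unfolding P_def pow2 a_def[symmetric] using K[OF tj0 _ tj0C] tj0a by simp
  then have ex: "\<exists>j. P j" by blast
  have jkP: "jk = (LEAST j. P j)" unfolding jk_def P_def by simp
  have Pjk: "P jk" unfolding jkP using ex by (rule LeastI_ex)
  then have R: "phi xk - phi (xk + theta^jk *\<^sub>R dk) \<ge> eta * theta^(2*jk) * eh * a^2"
    unfolding P_def a_def by simp
  define C2 where "C2 = 9 * (1 - 2*eta)^2 / LH^2"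
  have C2: "C2 = C^2" unfolding C2_def C_def by (simp add: power_divide power_mult_distrib power2_eq_square algebra_simps)
  have "phi xk - phi (xk + theta^jk *\<^sub>R dk) \<ge> eta * theta^2 * min 1 C2 * min (eg * eh) (eh^3)"
  proof (cases jk)
    case 0
    have "eta * theta^2 * eh * a^2 \<le> eta * 1 * eh * a^2"
      using theta eta eh by (intro mult_right_mono mult_left_mono) (auto simp: power_le_one)
    then have R0: "phi xk - phi (xk + theta^jk *\<^sub>R dk) \<ge> eta * theta^2 * eh * a^2" using R 0 by simp
    have "a^2 \<ge> eh^2" using a_gt eh by (intro power_mono) auto
    then show ?thesis by (intro final_arith[OF eta(1) eh(1) eg(1) _ _ R0]) (auto simp: C2_def)
  next
    case (Suc m)
    then have "\<not> P m" using not_less_Least[of m P] jkP by auto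
    then have nm: "\<not> (theta^m * a \<le> sqrt eg \<and> theta^m < C)"
      using K[of "theta^m"] theta unfolding P_def pow2 a_def[symmetric] by force
    have "eta * theta^(2*jk) * eh * a^2 = eta * theta^2 * eh * (theta^m * a)^2"
      unfolding Suc pow2 by (simp add: power_mult_distrib power2_eq_square)
    then have R1: "phi xk - phi (xk + theta^jk *\<^sub>R dk) \<ge> eta * theta^2 * eh * (theta^m * a)^2"
      using R by linarith
    have "(theta^m * a)^2 \<ge> eg \<or> (theta^m * a)^2 \<ge> C2 * eh^2"
    proof (cases "theta^m * a \<le> sqrt eg")
      case True
      then have "theta^m \<ge> C" using nm by simp
      then have "theta^m * a \<ge> C * eh" using a_gt Cpos theta eh by (intro mult_mono) auto
      then have "(theta^m * a)^2 \<ge> (C * eh)^2" using Cpos eh by (intro power_mono) auto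
      then show ?thesis unfolding C2 by (simp add: power_mult_distrib)
    next
      case False
      then have "theta^m * a \<ge> sqrt eg" by simp
      then have "(theta^m * a)^2 \<ge> (sqrt eg)^2" using sq by (intro power_mono) auto
      then show ?thesis using eg by simp
    qed
    then show ?thesis by (intro final_arith[OF eta(1) eh(1) eg(1) _ _ R1]) (auto simp: C2_def)
  qed
  then show ?thesis using ex unfolding P_def C2_def by blast
qed

end
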